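(* Let $p\ge 1$ and let $w(0),\ldots,w(p)$ be positive weights. For $p\times p$ orthogonal projectors $P_1,P_2$ (i.e. real matrices with $P_i=P_i'=P_i^2$, where the zero matrix is allowed as a projector of rank $0$) with ranks $k_1,k_2\in\{0,\ldots,p\}$, define \[ D_w^2(P_1,P_2)=\tfrac12\,\|w(k_1)P_1-w(k_2)P_2\|^2, \] where $\|\cdot\|$ is the Frobenius norm, and $D_w(P_1,P_2)\ge 0$ its square root. Then for every choice of positive weights $w$, $D_w$ is a metric on the set of $p\times p$ orthogonal projectors. Moreover, with \[ m(k_1,k_2)=\frac{w^2(k_1)k_1+w^2(k_2)k_2}{2}, \] for all orthogonal projectors $P_1,P_2$ of ranks $k_1,k_2$, \[ m(k_1,k_2)-w(k_1)w(k_2)\min\{k_1,k_2\}\;\le\; D_w^2(P_1,P_2)\;\le\; m(k_1,k_2)+w(k_1)w(k_2)\min\{p-k_1-k_2,0\}, \] and these bounds are sharp, i.e. for given $k_1,k_2$ each bound is attained by some pair of orthogonal projectors of ranks $k_1,k_2$.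
   Context: An orthogonal projector is a $p\times p$ real matrix $P$ with $P=P'=P^2$; its rank equals its trace. The Frobenius norm is $\|A\|^2=\mathrm{tr}(A'A)$. *)

theory Defs
  imports "HOL-Analysis.Analysis"
begin

definition orth_proj :: "real^'n^'n \<Rightarrow> bool" where
  "orth_proj P \<longleftrightarrow> transpose P = P \<and> P ** P = P"

definition frob_sq :: "real^'n^'n \<Rightarrow> real" where
  "frob_sq A = trace (transpose A ** A)"

definition Dw_sq :: "(nat \<Rightarrow> real) \<Rightarrow> real^'n^'n \<Rightarrow> real^'n^'n \<Rightarrow> real" where
  "Dw_sq w P1 P2 = frob_sq (w (rank P1) *\<^sub>R P1 - w (rank P2) *\<^sub>R P2) / 2"

definition Dw :: "(nat \<Rightarrow> real) \<Rightarrow> real^'n^'n \<Rightarrow> real^'n^'n \<Rightarrow> real" where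
  "Dw w P1 P2 = sqrt (Dw_sq w P1 P2)"

definition mw :: "(nat \<Rightarrow> real) \<Rightarrow> nat \<Rightarrow> nat \<Rightarrow> real" where
  "mw w k1 k2 = ((w k1)\<^sup>2 * real k1 + (w k2)\<^sup>2 * real k2) / 2"

end

theory Submission
  imports Defs
begin



lemma sym_entry: "transpose P = P \<Longrightarrow> P$i$j = P$j$i"
  by (metis transpose_def vec_lambda_beta)

lemma sym_inner:
  fixes P :: "real^'n^'n"
  assumes "transpose P = P"
  shows "(P *v x) \<bullet> y = x \<bullet> (P *v y)"
proof -
  have "(P *v x) \<bullet> y = (\<Sum>i\<in>UNIV. (\<Sum>j\<in>UNIV. P$i$j * x$j) * y$i)"
    by (simp add: inner_vec_def matrix_vector_mult_def)
  also have "\<dots> = (\<Sum>i\<in>UNIV. \<Sum>j\<in>UNIV. P$i$j * x$j * y$i)" by (simp add: sum_distrib_right)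
  also have "\<dots> = (\<Sum>j\<in>UNIV. \<Sum>i\<in>UNIV. P$i$j * x$j * y$i)" by (rule sum.swap)
  also have "\<dots> = (\<Sum>j\<in>UNIV. x$j * (\<Sum>i\<in>UNIV. P$j$i * y$i))"
    by (simp add: sum_distrib_left sym_entry[OF assms] mult_ac)
  also have "\<dots> = x \<bullet> (P *v y)"
    by (simp add: inner_vec_def matrix_vector_mult_def)
  finally show ?thesis .
qed

lemma proj_trace_rank:
  fixes P :: "real^'n^'n"
  assumes "orth_proj P"
  shows "trace P = real (rank P)"
proof -
  have sym: "transpose P = P" and idem: "P ** P = P" using assms by (auto simp: orth_proj_def)
  define V where "V = range (\<lambda>x. P *v x)"
  have sV: "subspace V" unfolding V_def
    by (metis linear_subspace_image subspace_UNIV matrix_vector_mul_linear image_def full_SetCompr_eq)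
  obtain U where U: "U \<subseteq> V" "pairwise orthogonal U" "\<And>x. x \<in> U \<Longrightarrow> norm x = 1"
    "independent U" "card U = dim V" "span U = V"
    using orthonormal_basis_subspace[OF sV] by metis
  have fU: "finite U" using U(4) independent_imp_finite by blast
  have fixu: "P *v u = u" if "u \<in> U" for u
  proof -
    obtain y where "u = P *v y" using U(1) \<open>u \<in> U\<close> unfolding V_def by blast
    then show ?thesis by (simp add: matrix_vector_mul_assoc idem)
  qed
  have exp: "P *v x = (\<Sum>u\<in>U. (x \<bullet> u) *\<^sub>R u)" for x
  proof -
    have "P *v x \<in> span U" using U(6) unfolding V_def by blast
    then have "P *v x = (\<Sum>u\<in>U. ((P *v x) \<bullet> u) *\<^sub>R u)"
      using orthonormal_basis_expand[OF U(2) U(3) _ fU] by metis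
    also have "\<dots> = (\<Sum>u\<in>U. (x \<bullet> u) *\<^sub>R u)"
      by (intro sum.cong refl) (simp add: sym_inner[OF sym] fixu)
    finally show ?thesis .
  qed
  have ent: "P$i$i = (\<Sum>u\<in>U. u$i * u$i)" for i
  proof -
    have "P$i$i = (P *v axis i 1)$i"
      by (simp add: matrix_vector_mult_basis column_def)
    also have "\<dots> = (\<Sum>u\<in>U. u$i * u$i)"
      by (simp add: exp inner_commute[of "axis i 1"] inner_axis)
    finally show ?thesis .
  qed
  have "trace P = (\<Sum>u\<in>U. \<Sum>i\<in>UNIV. u$i * u$i)"
    unfolding trace_def ent by (rule sum.swap)
  also have "\<dots> = (\<Sum>u\<in>U. 1)"
  proof (intro sum.cong refl)
    fix u assume "u \<in> U"
    then have "u \<bullet> u = 1" using U(3) by (simp add: norm_eq_1)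
    then show "(\<Sum>i\<in>UNIV. u$i * u$i) = 1" by (simp add: inner_vec_def)
  qed
  also have "\<dots> = real (rank P)" using U(5) by (simp add: rank_dim_range V_def)
  finally show ?thesis .
qed


lemma inner_trace:
  fixes A B :: "real^'n^'n"
  shows "A \<bullet> B = trace (transpose A ** B)"
proof -
  have "A \<bullet> B = (\<Sum>k\<in>UNIV. \<Sum>i\<in>UNIV. A$k$i * B$k$i)" by (simp add: inner_vec_def)
  also have "\<dots> = (\<Sum>i\<in>UNIV. \<Sum>k\<in>UNIV. A$k$i * B$k$i)" by (rule sum.swap)
  also have "\<dots> = trace (transpose A ** B)"
    by (simp add: trace_def matrix_matrix_mult_def transpose_def)
  finally show ?thesis .
qed

lemma mm_diff_l: "(A::real^'n^'n) ** (B - C) = A ** B - A ** C"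
  by (vector matrix_matrix_mult_def sum_subtractf algebra_simps)
lemma mm_diff_r: "((A::real^'n^'n) - B) ** C = A ** C - B ** C"
  by (vector matrix_matrix_mult_def sum_subtractf algebra_simps)

lemma transpose_diff: "transpose ((A::real^'n^'n) - B) = transpose A - transpose B"
  by (vector transpose_def)

lemma proj_compl:
  fixes Q :: "real^'n^'n"
  assumes "orth_proj Q" shows "orth_proj (mat 1 - Q)"
  using assms unfolding orth_proj_def
  by (simp add: transpose_diff mm_diff_l mm_diff_r)

lemma proj_inner_nonneg:
  fixes P Q :: "real^'n^'n"
  assumes P: "orth_proj P" and Q: "orth_proj Q"
  shows "P \<bullet> Q \<ge> 0"
proof -
  have sP: "transpose P = P" "P ** P = P" and sQ: "transpose Q = Q" "Q ** Q = Q"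
    using P Q by (auto simp: orth_proj_def)
  have h1: "(Q ** P) \<bullet> (Q ** P) = trace (P ** Q ** Q ** P)"
    by (simp add: inner_trace matrix_transpose_mul sP sQ matrix_mul_assoc)
  have qq: "Q ** (Q ** P) = Q ** P" by (simp add: matrix_mul_assoc sQ)
  have h2: "trace (P ** Q ** Q ** P) = trace (P ** (Q ** P))"
    by (simp add: matrix_mul_assoc[symmetric] qq)
  have "(Q ** P) \<bullet> (Q ** P) = trace (P ** (Q ** P))" using h1 h2 by simp
  also have "\<dots> = trace ((Q ** P) ** P)" by (rule trace_mul_sym)
  also have "\<dots> = trace (Q ** P)" by (simp add: matrix_mul_assoc[symmetric] sP)
  also have "\<dots> = trace (P ** Q)" by (rule trace_mul_sym)
  also have "\<dots> = P \<bullet> Q" by (simp add: inner_trace sP)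
  finally show ?thesis by (metis inner_ge_zero)
qed

lemma proj_self: "orth_proj P \<Longrightarrow> P \<bullet> P = real (rank P)"
  by (simp add: inner_trace orth_proj_def proj_trace_rank)

lemma proj_I_inner: "orth_proj P \<Longrightarrow> mat 1 \<bullet> P = real (rank P)"
  by (simp add: inner_trace proj_trace_rank)

lemma I_inner_I: "(mat 1 :: real^'n^'n) \<bullet> mat 1 = real CARD('n)"
  by (simp add: inner_trace trace_I)

lemma proj_bounds:
  fixes P Q :: "real^'n^'n"
  assumes P: "orth_proj P" and Q: "orth_proj Q"
  shows "0 \<le> P \<bullet> Q" "P \<bullet> Q \<le> real (rank P)" "P \<bullet> Q \<le> real (rank Q)"
    "real (rank P) + real (rank Q) - real CARD('n) \<le> P \<bullet> Q"
proof -
  show "0 \<le> P \<bullet> Q" by (rule proj_inner_nonneg[OF P Q])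
  have "0 \<le> P \<bullet> (mat 1 - Q)" by (rule proj_inner_nonneg[OF P proj_compl[OF Q]])
  then show "P \<bullet> Q \<le> real (rank P)"
    using proj_self[OF P] proj_I_inner[OF P] by (simp add: inner_diff_right inner_commute)
  have "0 \<le> Q \<bullet> (mat 1 - P)" by (rule proj_inner_nonneg[OF Q proj_compl[OF P]])
  then show "P \<bullet> Q \<le> real (rank Q)"
    using proj_self[OF Q] proj_I_inner[OF Q] by (simp add: inner_diff_right inner_commute)
  have "0 \<le> (mat 1 - P) \<bullet> (mat 1 - Q)"
    by (rule proj_inner_nonneg[OF proj_compl[OF P] proj_compl[OF Q]])
  then show "real (rank P) + real (rank Q) - real CARD('n) \<le> P \<bullet> Q"
    using proj_I_inner[OF P] proj_I_inner[OF Q] I_inner_I[where 'n='n]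
    by (simp add: inner_diff_right inner_diff_left inner_commute)
qed

lemma Dw_sq_inner: "Dw_sq w P Q = ((w (rank P) *\<^sub>R P - w (rank Q) *\<^sub>R Q) \<bullet> (w (rank P) *\<^sub>R P - w (rank Q) *\<^sub>R Q)) / 2"
  by (simp add: Dw_sq_def frob_sq_def inner_trace)

lemma Dw_sq_formula:
  fixes P Q :: "real^'n^'n"
  assumes P: "orth_proj P" and Q: "orth_proj Q"
  shows "Dw_sq w P Q = mw w (rank P) (rank Q) - w (rank P) * w (rank Q) * (P \<bullet> Q)"
  using proj_self[OF P] proj_self[OF Q]
  by (simp add: Dw_sq_inner mw_def inner_diff_right inner_diff_left inner_commute[of Q P]
      power2_eq_square algebra_simps divide_simps)




lemma rank_le: "rank (P::real^'n^'n) \<le> CARD('n)"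
  using rank_bound[of P] by simp

lemma Dw_norm: "Dw w P Q = norm (w (rank P) *\<^sub>R P - w (rank Q) *\<^sub>R Q) / sqrt 2"
  by (simp add: Dw_def Dw_sq_inner real_sqrt_divide norm_eq_sqrt_inner)

lemma proj_eq:
  fixes P Q :: "real^'n^'n"
  assumes P: "orth_proj P" and Q: "orth_proj Q" and a: "a > 0" and b: "b > 0"
    and e: "a *\<^sub>R P = b *\<^sub>R Q"
  shows "P = Q"
proof -
  define c where "c = b / a"
  have c: "c > 0" using a b by (simp add: c_def)
  have PQ: "P = c *\<^sub>R Q" using e a unfolding c_def
    by (metis (no_types, lifting) divide_inverse_commute less_irrefl scaleR_scaleR
        scaleR_one left_inverse)
  have QQ: "Q ** Q = Q" using Q by (simp add: orth_proj_def)
  have PP: "P ** P = P" using P by (simp add: orth_proj_def)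
  have "(c *\<^sub>R Q) ** (c *\<^sub>R Q) = (c * c) *\<^sub>R (Q ** Q)"
    by (simp add: matrix_matrix_mult_def vec_eq_iff sum_distrib_left algebra_simps)
  then have "P ** P = (c * c) *\<^sub>R Q" by (simp add: PQ QQ)
  with PP PQ have "(c * c) *\<^sub>R Q = c *\<^sub>R Q" by simp
  then have "Q = 0 \<or> c * c = c" by (metis scaleR_cancel_right)
  then show ?thesis
  proof
    assume "Q = 0" then show ?thesis using PQ by simp
  next
    assume "c * c = c" then have "c = 1" using c by (metis mult_cancel_right1 less_irrefl)
    then show ?thesis using PQ by simp
  qed
qed

lemma metric:
  fixes w :: "nat \<Rightarrow> real"
  assumes wpos: "\<And>k. k \<le> CARD('n) \<Longrightarrow> w k > 0"
  shows "Metric_space {P :: real^'n^'n. orth_proj P} (Dw w)"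
proof
  fix x y :: "real^'n^'n"
  show "0 \<le> Dw w x y" by (simp add: Dw_norm)
  show "Dw w x y = Dw w y x" by (simp add: Dw_norm norm_minus_commute)
next
  fix x y :: "real^'n^'n"
  assume x: "x \<in> {P. orth_proj P}" and y: "y \<in> {P. orth_proj P}"
  show "Dw w x y = 0 \<longleftrightarrow> x = y"
  proof
    assume "Dw w x y = 0"
    then have "w (rank x) *\<^sub>R x = w (rank y) *\<^sub>R y" by (simp add: Dw_norm)
    then show "x = y" using proj_eq x y wpos[OF rank_le] by blast
  qed (simp add: Dw_norm)
next
  fix x y z :: "real^'n^'n"
  let ?f = "\<lambda>P :: real^'n^'n. w (rank P) *\<^sub>R P"
  have "norm (?f x - ?f z) \<le> norm (?f x - ?f y) + norm (?f y - ?f z)"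
    using norm_triangle_ineq[of "?f x - ?f y" "?f y - ?f z"] by simp
  then show "Dw w x z \<le> Dw w x y + Dw w y z"
    by (simp add: Dw_norm add_divide_distrib[symmetric] divide_right_mono)
qed

definition diagP :: "'n set \<Rightarrow> real^'n^'n" where
  "diagP S = (\<chi> i j. if i = j \<and> i \<in> S then 1 else 0)"

lemma sum_ind: fixes i j :: "'n::finite" shows "(\<Sum>k\<in>UNIV. (if i = k \<and> i \<in> S then 1 else 0) * (if k = j \<and> k \<in> T then 1 else (0::real)))
   = (if i = j \<and> i \<in> S \<inter> T then 1 else 0)"
proof -
  have "(\<Sum>k\<in>UNIV. (if i = k \<and> i \<in> S then 1 else 0) * (if k = j \<and> k \<in> T then 1 else (0::real)))
     = (\<Sum>k\<in>UNIV. if k = i then (if i = j \<and> i \<in> S \<inter> T then 1 else 0) else 0)"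
    by (intro sum.cong) auto
  then show ?thesis by (subst (asm) sum.delta) auto
qed

lemma sum_ind2: fixes i :: "'n::finite" shows "(\<Sum>j\<in>UNIV. (if i = j \<and> i \<in> S then 1 else 0) * (if i = j \<and> i \<in> T then 1 else (0::real)))
   = (if i \<in> S \<inter> T then 1 else 0)"
proof -
  have "(\<Sum>j\<in>UNIV. (if i = j \<and> i \<in> S then 1 else 0) * (if i = j \<and> i \<in> T then 1 else (0::real)))
     = (\<Sum>j\<in>UNIV. if j = i then (if i \<in> S \<inter> T then 1 else 0) else 0)"
    by (intro sum.cong) auto
  then show ?thesis by (subst (asm) sum.delta) auto
qed

lemma diagP_proj: "orth_proj (diagP S)"
  unfolding orth_proj_def
  by (auto simp: diagP_def transpose_def matrix_matrix_mult_def vec_eq_iff sum_ind)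

lemma diagP_inner: "diagP S \<bullet> diagP T = real (card (S \<inter> T))"
proof -
  have "diagP S \<bullet> diagP T = (\<Sum>i\<in>UNIV. \<Sum>j\<in>UNIV. (if i = j \<and> i \<in> S then 1 else 0) * (if i = j \<and> i \<in> T then 1 else (0::real)))"
    by (simp add: inner_vec_def diagP_def)
  also have "\<dots> = (\<Sum>i\<in>UNIV. if i \<in> S \<inter> T then 1 else 0)"
    by (simp add: sum_ind2)
  also have "\<dots> = real (card (S \<inter> T))" by (simp add: sum.If_cases Int_def)
  finally show ?thesis .
qed

lemma diagP_rank: "rank (diagP S) = card S"
  using proj_self[OF diagP_proj[of S]] diagP_inner[of S S] by simp




lemma attain:
  fixes w :: "nat \<Rightarrow> real"
  assumes k1: "k1 \<le> CARD('n)" and k2: "k2 \<le> CARD('n)"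
  shows "(\<exists>P1 P2 :: real^'n^'n. orth_proj P1 \<and> orth_proj P2 \<and> rank P1 = k1 \<and> rank P2 = k2 \<and>
             Dw_sq w P1 P2 = mw w k1 k2 - w k1 * w k2 * real (min k1 k2))
        \<and> (\<exists>P1 P2 :: real^'n^'n. orth_proj P1 \<and> orth_proj P2 \<and> rank P1 = k1 \<and> rank P2 = k2 \<and>
             Dw_sq w P1 P2 = mw w k1 k2 + w k1 * w k2 * min (real CARD('n) - real k1 - real k2) 0)"
proof -
  let ?p = "CARD('n)"
  obtain h :: "nat \<Rightarrow> 'n" where h: "bij_betw h {0..<?p} UNIV"
    using ex_bij_betw_nat_finite[of "UNIV :: 'n set"] by auto
  have inj: "inj_on h {0..<?p}" using h bij_betw_def by blast
  have cardh: "card (h ` A) = card A" if "A \<subseteq> {0..<?p}" for A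
    using card_image inj_on_subset[OF inj that] by blast
  have inth: "h ` A \<inter> h ` B = h ` (A \<inter> B)" if "A \<subseteq> {0..<?p}" "B \<subseteq> {0..<?p}" for A B
    using inj_on_image_Int[OF inj that] by simp
  define S where "S = h ` {0..<k1}"
  define T1 where "T1 = h ` {0..<k2}"
  define T2 where "T2 = h ` {?p - k2..<?p}"
  have sub: "{0..<k1} \<subseteq> {0..<?p}" "{0..<k2} \<subseteq> {0..<?p}" "{?p - k2..<?p} \<subseteq> {0..<?p}"
    using k1 k2 by auto
  have cS: "card S = k1" unfolding S_def using cardh[OF sub(1)] by simp
  have cT1: "card T1 = k2" unfolding T1_def using cardh[OF sub(2)] by simp
  have cT2: "card T2 = k2" unfolding T2_def using cardh[OF sub(3)] k2 by simp
  have i1: "card (S \<inter> T1) = min k1 k2"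
    unfolding S_def T1_def inth[OF sub(1) sub(2)]
    using cardh[of "{0..<min k1 k2}"] k1 by (simp add: min_le_iff_disj)
  have e2: "{0..<k1} \<inter> {?p - k2..<?p} = {?p - k2..<k1}" using k1 by auto
  have i2: "card (S \<inter> T2) = k1 - (?p - k2)"
    unfolding S_def T2_def inth[OF sub(1) sub(3)] e2
    using cardh[of "{?p - k2..<k1}"] k1 by auto
  have r2: "real (k1 - (?p - k2)) = - min (real ?p - real k1 - real k2) 0"
    using k2 by (auto simp: min_def of_nat_diff)
  show ?thesis
  proof
    show "\<exists>P1 P2 :: real^'n^'n. orth_proj P1 \<and> orth_proj P2 \<and> rank P1 = k1 \<and> rank P2 = k2 \<and>
             Dw_sq w P1 P2 = mw w k1 k2 - w k1 * w k2 * real (min k1 k2)"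
      by (rule exI[of _ "diagP S"], rule exI[of _ "diagP T1"])
        (simp add: diagP_proj diagP_rank cS cT1 Dw_sq_formula diagP_inner i1)
    show "\<exists>P1 P2 :: real^'n^'n. orth_proj P1 \<and> orth_proj P2 \<and> rank P1 = k1 \<and> rank P2 = k2 \<and>
             Dw_sq w P1 P2 = mw w k1 k2 + w k1 * w k2 * min (real CARD('n) - real k1 - real k2) 0"
      by (rule exI[of _ "diagP S"], rule exI[of _ "diagP T2"])
        (simp add: diagP_proj diagP_rank cS cT2 Dw_sq_formula diagP_inner i2 r2)
  qed
qed

lemma bounds:
  fixes w :: "nat \<Rightarrow> real" and P1 P2 :: "real^'n^'n"
  assumes wpos: "\<And>k. k \<le> CARD('n) \<Longrightarrow> w k > 0"
    and P1: "orth_proj P1" and P2: "orth_proj P2"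
  shows "mw w (rank P1) (rank P2) - w (rank P1) * w (rank P2) * real (min (rank P1) (rank P2))
            \<le> Dw_sq w P1 P2
        \<and> Dw_sq w P1 P2 \<le> mw w (rank P1) (rank P2)
            + w (rank P1) * w (rank P2) * min (real CARD('n) - real (rank P1) - real (rank P2)) 0"
proof -
  define ab where "ab = w (rank P1) * w (rank P2)"
  have ab: "ab > 0" unfolding ab_def using wpos[OF rank_le] by simp
  note b = proj_bounds[OF P1 P2]
  have "P1 \<bullet> P2 \<le> real (min (rank P1) (rank P2))" using b by (simp add: min_def)
  then have l: "ab * (P1 \<bullet> P2) \<le> ab * real (min (rank P1) (rank P2))"
    using ab by (intro mult_left_mono) auto
  have "- min (real CARD('n) - real (rank P1) - real (rank P2)) 0 \<le> P1 \<bullet> P2"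
    using b by (simp add: min_def)
  then have u: "ab * (- min (real CARD('n) - real (rank P1) - real (rank P2)) 0) \<le> ab * (P1 \<bullet> P2)"
    using ab by (intro mult_left_mono) auto
  show ?thesis using l u unfolding Dw_sq_formula[OF P1 P2] ab_def[symmetric] by simp
qed

theorem proposition2p1:
  fixes w :: "nat \<Rightarrow> real"
  assumes wpos: "\<And>k. k \<le> CARD('n) \<Longrightarrow> w k > 0"
  shows "Metric_space {P :: real^'n^'n. orth_proj P} (Dw w)
    \<and> (\<forall>P1 P2 :: real^'n^'n. orth_proj P1 \<and> orth_proj P2 \<longrightarrow>
          mw w (rank P1) (rank P2) - w (rank P1) * w (rank P2) * real (min (rank P1) (rank P2))
            \<le> Dw_sq w P1 P2
        \<and> Dw_sq w P1 P2 \<le> mw w (rank P1) (rank P2)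
            + w (rank P1) * w (rank P2) * min (real CARD('n) - real (rank P1) - real (rank P2)) 0)
    \<and> (\<forall>k1 k2. k1 \<le> CARD('n) \<and> k2 \<le> CARD('n) \<longrightarrow>
          (\<exists>P1 P2 :: real^'n^'n. orth_proj P1 \<and> orth_proj P2 \<and> rank P1 = k1 \<and> rank P2 = k2 \<and>
             Dw_sq w P1 P2 = mw w k1 k2 - w k1 * w k2 * real (min k1 k2))
        \<and> (\<exists>P1 P2 :: real^'n^'n. orth_proj P1 \<and> orth_proj P2 \<and> rank P1 = k1 \<and> rank P2 = k2 \<and>
             Dw_sq w P1 P2 = mw w k1 k2 + w k1 * w k2 * min (real CARD('n) - real k1 - real k2) 0))"
proof (intro conjI allI impI)
  show "Metric_space {P :: real^'n^'n. orth_proj P} (Dw w)" by (rule metric[OF wpos])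
next
  fix P1 P2 :: "real^'n^'n" assume "orth_proj P1 \<and> orth_proj P2"
  then show "mw w (rank P1) (rank P2) - w (rank P1) * w (rank P2) * real (min (rank P1) (rank P2))
            \<le> Dw_sq w P1 P2"
   and "Dw_sq w P1 P2 \<le> mw w (rank P1) (rank P2)
            + w (rank P1) * w (rank P2) * min (real CARD('n) - real (rank P1) - real (rank P2)) 0"
    using bounds[of w P1 P2, OF wpos] by auto
next
  fix k1 k2 assume "k1 \<le> CARD('n) \<and> k2 \<le> CARD('n)"
  then show "\<exists>P1 P2 :: real^'n^'n. orth_proj P1 \<and> orth_proj P2 \<and> rank P1 = k1 \<and> rank P2 = k2 \<and>
             Dw_sq w P1 P2 = mw w k1 k2 - w k1 * w k2 * real (min k1 k2)"
   and "\<exists>P1 P2 :: real^'n^'n. orth_proj P1 \<and> orth_proj P2 \<and> rank P1 = k1 \<and> rank P2 = k2 \<and>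
             Dw_sq w P1 P2 = mw w k1 k2 + w k1 * w k2 * min (real CARD('n) - real k1 - real k2) 0"
    using attain[of k1 k2 w] by auto
qed


end
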